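(* For $\alpha,p\in(0,1]$, let $\mu_{\alpha,p}$ be the probability measure on $\mathbb{R}$ with Cauchy transform $$G_{\mu_{\alpha,p}}(z)=-\left(\frac{\big(1+(-\frac1z)^\alpha\big)^p-1}{p}\right)^{1/\alpha},\qquad z\in\mathbb{C}^+$$ (principal powers). Then $\mu_{\alpha,p}=\mathbf{M}_\alpha^+(\bm\beta_{1-p,1+p})$.
   Context: $G_\mu(z)=\int\frac{1}{z-x}\mu(dx)$, $F_\mu=1/G_\mu$. $\bm\beta_{p,q}$ is the beta distribution with density $\frac{1}{B(p,q)}x^{p-1}(1-x)^{q-1}$ on $(0,1)$ (for $p=1$, $\bm\beta_{0,2}$ is interpreted by weak continuity as $\delta_0$). $\mathbf{M}_\alpha^+:\mathcal{P}(\mathbb{R}_+)\to\mathcal{P}(\mathbb{R}_+)$ is characterized by $F_{\mathbf{M}_\alpha^+(\mu)}(z)=-\big(-F_\mu(-(-z)^\alpha)\big)^{1/\alpha}$ for $z<0$ (equivalently $\mathbf{M}_\alpha^+(\mu)=\mathbb{B}_{\bm\beta_{\alpha,1-\alpha}}(\mu)^{\boxtimes1/\alpha}\boxtimes\mathbf{m}_\alpha^+$, with $\mathbb{B}_\sigma(\mu)$ defined by $\sigma\boxtimes\mu=\sigma\circlearrowright\mathbb{B}_\sigma(\mu)$ and $\mathbf{m}_\alpha^+$ the positive monotone stable law). *)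

theory Defs
  imports "HOL-Probability.Probability"
begin

definition cauchy_transform :: "real measure \<Rightarrow> complex \<Rightarrow> complex" where
  "cauchy_transform \<mu> z = integral\<^sup>L \<mu> (\<lambda>x. 1 / (z - complex_of_real x))"

definition F_transform :: "real measure \<Rightarrow> complex \<Rightarrow> complex" where
  "F_transform \<mu> z = 1 / cauchy_transform \<mu> z"

definition prob_on_reals :: "real measure \<Rightarrow> bool" where
  "prob_on_reals \<mu> \<longleftrightarrow> prob_space \<mu> \<and> sets \<mu> = sets borel"

text \<open>Beta distribution beta_{a,b} with density x^(a-1)(1-x)^(b-1)/B(a,b) on (0,1);
  for a = 0 it is interpreted (by weak continuity, as in the paper for beta_{0,2}) as delta_0.\<close>
definition beta_dist :: "real \<Rightarrow> real \<Rightarrow> real measure" where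
  "beta_dist a b = (if a = 0 then return borel 0 else
     density lborel (\<lambda>x. ennreal (indicator {0<..<1} x *
        x powr (a - 1) * (1 - x) powr (b - 1) / Beta a b)))"

definition is_M_alpha_plus :: "real \<Rightarrow> real measure \<Rightarrow> real measure \<Rightarrow> bool" where
  "is_M_alpha_plus \<alpha> \<nu> \<rho> \<longleftrightarrow>
     prob_on_reals \<rho> \<and> \<rho> {0..} = 1 \<and>
     (\<forall>z::real. z < 0 \<longrightarrow>
        F_transform \<rho> (complex_of_real z) =
          - ((- F_transform \<nu> (complex_of_real (- ((- z) powr \<alpha>))))
               powr complex_of_real (1 / \<alpha>)))"

end

theory Submission
  imports Defs
begin


lemma beta_K:
  fixes p :: real
  assumes "0 < p" "p < 1"
  shows "(\<integral>\<^sup>+x. ennreal (x powr (-p) * (1-x) powr (p-1) * indicator {0..1} x) \<partial>lborel) = ennreal (Beta (1-p) p)"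
proof -
  have "((\<lambda>t. t powr (1 - p - 1) * (1 - t) powr (p - 1)) has_integral Beta (1-p) p) {0..1}"
    using has_integral_Beta_real[of "1-p" p] assms by simp
  from nn_integral_has_integral_lebesgue'[OF _ this]
  have "(\<integral>\<^sup>+x. ennreal (x powr (-p) * (1-x) powr (p-1)) * indicator {0..1} x \<partial>lborel) = ennreal (Beta (1-p) p)"
    by simp
  moreover have "(\<integral>\<^sup>+x. ennreal (x powr (-p) * (1-x) powr (p-1) * indicator {0..1} x) \<partial>lborel)
     = (\<integral>\<^sup>+x. ennreal (x powr (-p) * (1-x) powr (p-1)) * indicator {0..1} x \<partial>lborel)"
    by (intro nn_integral_cong) (auto simp: indicator_def)
  ultimately show ?thesis by simp
qed

lemma subst_pt:
  fixes x s p :: real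
  assumes "0 < x" "x < 1" "0 < s"
  shows "(x*(1+s)/(x+s)) powr (-p) * (1 - x*(1+s)/(x+s)) powr (p-1) * (s*(1+s)/(x+s)^2)
     = ((1+s) powr (1-p) * s powr p) * (x powr (-p) * (1-x) powr (p-1) / (x+s))"
proof -
  have xs: "x + s > 0" using assms by simp
  have e1: "1 - x*(1+s)/(x+s) = s*(1-x)/(x+s)" using xs by (simp add: field_simps)
  have a: "(x*(1+s)/(x+s)) powr (-p) = x powr (-p) * (1+s) powr (-p) * (x+s) powr p"
  proof -
    have "(x*(1+s)/(x+s)) powr (-p) = (x*(1+s)) powr (-p) / (x+s) powr (-p)"
      using assms xs by (simp add: powr_divide)
    also have "(x*(1+s)) powr (-p) = x powr (-p) * (1+s) powr (-p)"
      using assms by (simp add: powr_mult)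
    also have "(x+s) powr (-p) = 1 / (x+s) powr p" by (simp add: powr_minus_divide)
    finally show ?thesis using xs by simp
  qed
  have b: "(s*(1-x)/(x+s)) powr (p-1) = s powr (p-1) * (1-x) powr (p-1) * (x+s) powr (1-p)"
  proof -
    have "(s*(1-x)/(x+s)) powr (p-1) = (s*(1-x)) powr (p-1) / (x+s) powr (p-1)"
      using assms xs by (simp add: powr_divide)
    also have "(s*(1-x)) powr (p-1) = s powr (p-1) * (1-x) powr (p-1)"
      using assms by (simp add: powr_mult)
    also have "(x+s) powr (p-1) = 1 / (x+s) powr (1-p)" using powr_minus_divide[of "x+s" "1-p"] by simp
    finally show ?thesis using xs by simp
  qed
  have c: "(x+s) powr p * (x+s) powr (1-p) = x + s"
    using xs by (simp flip: powr_add)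
  have d: "(1+s) powr (-p) * (1+s) = (1+s) powr (1-p)"
    using assms by (simp add: powr_add powr_minus field_simps flip: powr_add)
  have f: "s powr (p-1) * s = s powr p"
    using assms by (simp add: powr_diff field_simps)
  have g: "\<And>v1 v2 v3 v4 v5 v6 :: real. v1 * v2 * v3 * (v4 * v5 * v6) * (s * (1+s)/(x+s)^2) = (v2 * (1+s)) * (v4 * s) * (v1 * v5) * (v3 * v6)/(x+s)^2"
    by (simp add: field_simps)
  show ?thesis unfolding e1 a b g c d f
    using xs by (simp add: power2_eq_square mult_ac)
qed

lemma beta_J:
  fixes p s :: real
  assumes p: "0 < p" "p < 1" and s: "0 < s"
  shows "(\<integral>\<^sup>+x. ennreal (x powr (-p) * (1-x) powr (p-1) / (x+s) * indicator {0..1} x) \<partial>lborel)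
     = ennreal (Beta (1-p) p / ((1+s) powr (1-p) * s powr p))"
proof -
  define g where "g = (\<lambda>x::real. x*(1+s)/(x+s))"
  define g' where "g' = (\<lambda>x::real. s*(1+s)/(x+s)^2)"
  define C where "C = (1+s) powr (1-p) * s powr p"
  have Cpos: "C > 0" using s by (simp add: C_def)
  have g0: "g 0 = 0" and g1: "g 1 = 1" using s by (auto simp: g_def)
  have "(\<integral>\<^sup>+x. ennreal ((\<lambda>y. y powr (-p) * (1-y) powr (p-1)) x * indicator {g 0..g 1} x) \<partial>lborel) =
             (\<integral>\<^sup>+x. ennreal ((\<lambda>y. y powr (-p) * (1-y) powr (p-1)) (g x) * g' x * indicator {0..1} x) \<partial>lborel)"
  proof (rule nn_integral_substitution)
    show "set_borel_measurable borel {g 0..g 1} (\<lambda>y. y powr (-p) * (1-y) powr (p-1))"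
      by (simp add: set_borel_measurable_def)
    show "(g has_real_derivative g' x) (at x)" if "x \<in> {0..1}" for x
    proof -
      have "x + s \<noteq> 0" using that s by auto
      then show ?thesis unfolding g_def g'_def
        by (auto intro!: derivative_eq_intros simp: field_simps power2_eq_square)
    qed
    show "continuous_on {0..1} g'" unfolding g'_def
      using s by (intro continuous_intros) auto
    show "0 \<le> g' x" if "x \<in> {0..1}" for x using that s by (simp add: g'_def)
  qed simp
  also have "\<dots> = (\<integral>\<^sup>+x. ennreal C * ennreal (x powr (-p) * (1-x) powr (p-1) / (x+s) * indicator {0..1} x) \<partial>lborel)"
  proof (intro nn_integral_cong)
    fix x :: real
    have "(g x) powr (-p) * (1-g x) powr (p-1) * g' x * indicator {0..1} x
        = C * (x powr (-p) * (1-x) powr (p-1) / (x+s) * indicator {0..1} x)"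
    proof (cases "0 < x \<and> x < 1")
      case True
      then show ?thesis using subst_pt[of x s p] s by (simp add: g_def g'_def C_def)
    next
      case False
      then consider "x = 0" | "x = 1" | "x \<notin> {0..1}" by force
      then show ?thesis using s by cases (auto simp: g_def)
    qed
    then show "ennreal ((g x) powr (-p) * (1-g x) powr (p-1) * g' x * indicator {0..1} x)
      = ennreal C * ennreal (x powr (-p) * (1-x) powr (p-1) / (x+s) * indicator {0..1} x)"
      using ennreal_mult'[of C "x powr (-p) * (1-x) powr (p-1) / (x+s) * indicator {0..1} x"] Cpos
      by simp
  qed
  also have "\<dots> = ennreal C * (\<integral>\<^sup>+x. ennreal (x powr (-p) * (1-x) powr (p-1) / (x+s) * indicator {0..1} x) \<partial>lborel)"
    by (rule nn_integral_cmult) simp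
  finally have eq: "ennreal (Beta (1-p) p) = ennreal C * (\<integral>\<^sup>+x. ennreal (x powr (-p) * (1-x) powr (p-1) / (x+s) * indicator {0..1} x) \<partial>lborel)"
    using beta_K[OF p] unfolding g0 g1 by simp
  have "ennreal (1/C) * ennreal (Beta (1-p) p) = (ennreal (1/C) * ennreal C) * (\<integral>\<^sup>+x. ennreal (x powr (-p) * (1-x) powr (p-1) / (x+s) * indicator {0..1} x) \<partial>lborel)"
    unfolding eq by (simp add: mult.assoc)
  also have "ennreal (1/C) * ennreal C = 1" using Cpos by (simp flip: ennreal_mult)
  finally have "ennreal (1/C * Beta (1-p) p) = (\<integral>\<^sup>+x. ennreal (x powr (-p) * (1-x) powr (p-1) / (x+s) * indicator {0..1} x) \<partial>lborel)"
    using Cpos ennreal_mult'[of "1/C" "Beta (1-p) p"] by simp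
  then show ?thesis by (simp add: C_def)
qed

lemma beta_I:
  fixes p s :: real
  assumes p: "0 < p" "p < 1" and s: "0 < s"
  shows "has_bochner_integral lborel (\<lambda>x. x powr (-p) * (1-x) powr p / (x+s) * indicator {0..1} x)
     (Beta (1-p) p * ((1+s) powr p * s powr (-p) - 1))"
proof -
  define C where "C = (1+s) powr (1-p) * s powr p"
  have Cpos: "C > 0" using s by (simp add: C_def)
  have Bpos: "Beta (1-p) p > 0" using p by (simp add: Beta_def)
  have hJ: "has_bochner_integral lborel (\<lambda>x. x powr (-p) * (1-x) powr (p-1) / (x+s) * indicator {0..1} x)
     (Beta (1-p) p / C)"
    by (rule has_bochner_integral_nn_integral)
       (use beta_J[OF p s] Cpos Bpos s in \<open>auto simp: C_def indicator_def intro!: AE_I2\<close>)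
  have hK: "has_bochner_integral lborel (\<lambda>x. x powr (-p) * (1-x) powr (p-1) * indicator {0..1} x)
     (Beta (1-p) p)"
    by (rule has_bochner_integral_nn_integral)
       (use beta_K[OF p] Bpos in \<open>auto simp: indicator_def intro!: AE_I2\<close>)
  have h: "has_bochner_integral lborel (\<lambda>x. (1+s) * (x powr (-p) * (1-x) powr (p-1) / (x+s) * indicator {0..1} x)
       - x powr (-p) * (1-x) powr (p-1) * indicator {0..1} x)
     ((1+s) * (Beta (1-p) p / C) - Beta (1-p) p)"
    by (intro has_bochner_integral_diff has_bochner_integral_mult_right hJ hK)
  show ?thesis
  proof (rule has_bochner_integral_cong[THEN iffD1, OF refl _ _ h])
    fix x :: real
    show "(1+s) * (x powr (-p) * (1-x) powr (p-1) / (x+s) * indicator {0..1} x)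
       - x powr (-p) * (1-x) powr (p-1) * indicator {0..1} x = x powr (-p) * (1-x) powr p / (x+s) * indicator {0..1} x"
    proof (cases "0 < x \<and> x < 1")
      case True
      then have e: "(1-x) powr p = (1-x) powr (p-1) * (1-x)" by (simp add: powr_diff)
      then show ?thesis using True s by (simp only: e) (simp add: field_simps)
    next
      case False
      then consider "x = 0" | "x = 1" | "x \<notin> {0..1}" by force
      then show ?thesis using p by cases auto
    qed
  next
    have "(1+s) / C = (1+s) powr p * s powr (-p)"
    proof -
      have "(1+s) powr (1-p) = (1+s) / (1+s) powr p" using s by (simp add: powr_diff)
      moreover have "s powr p > 0" "(1+s) powr p > 0" using s by auto
      ultimately show ?thesis using s by (simp add: C_def powr_minus field_simps)
    qed
    then show "(1+s) * (Beta (1-p) p / C) - Beta (1-p) p = Beta (1-p) p * ((1+s) powr p * s powr (-p) - 1)"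
      by (metis (no_types, lifting) right_diff_distrib times_divide_eq_left times_divide_eq_right mult.commute mult.right_neutral)
  qed
qed

lemma beta_cauchy:
  fixes p s :: real
  assumes p: "0 < p" "p \<le> 1" and s: "0 < s"
  shows "cauchy_transform (beta_dist (1-p) (1+p)) (complex_of_real (-s))
     = complex_of_real (-(((1+s) powr p * s powr (-p) - 1)/p))"
proof (cases "p = 1")
  case True
  have "cauchy_transform (beta_dist (1-p) (1+p)) (complex_of_real (-s)) = 1 / complex_of_real (-s)"
    unfolding cauchy_transform_def beta_dist_def using True
    by (simp add: integral_return)
  then show ?thesis using True s by (simp add: field_simps)
next
  case False
  with p have p1: "p < 1" by simp
  define B' where "B' = Beta (1-p) (1+p)"
  have B'eq: "B' = p * Beta (1-p) p"
  proof -
    have "p \<notin> \<int>\<^sub>\<le>\<^sub>0" using p by (auto elim!: nonpos_Ints_cases)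
    then show ?thesis using Beta_plus1_right[of p "1-p"] unfolding B'_def by (simp add: add.commute)
  qed
  have Bpos: "Beta (1-p) p > 0" using p p1 by (simp add: Beta_def)
  define d where "d = (\<lambda>x::real. indicator {0<..<1} x * x powr (1 - p - 1) * (1 - x) powr (1 + p - 1) / B')"
  have dens: "beta_dist (1-p) (1+p) = density lborel (\<lambda>x. ennreal (d x))"
    using p1 unfolding beta_dist_def d_def B'_def by simp
  have "cauchy_transform (beta_dist (1-p) (1+p)) (complex_of_real (-s))
      = integral\<^sup>L lborel (\<lambda>x. d x *\<^sub>R (1 / (complex_of_real (-s) - complex_of_real x)))"
    unfolding cauchy_transform_def dens
    by (rule integral_density) (auto simp: d_def B'eq Bpos p intro!: AE_I2 divide_nonneg_pos mult_nonneg_nonneg)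
  also have "\<dots> = integral\<^sup>L lborel (\<lambda>x::real. complex_of_real (- (1/B') * (x powr (-p) * (1-x) powr p / (x+s) * indicator {0..1} x)))"
  proof (rule Bochner_Integration.integral_cong[OF refl])
    fix x :: real assume "x \<in> space lborel"
    have "d x / (-s - x) = - (1/B') * (x powr (-p) * (1-x) powr p / (x+s) * indicator {0..1} x)"
    proof (cases "0 < x \<and> x < 1")
      case True
      have "-s-x = -(x+s)" by simp
      then have "d x / (-s - x) = - (d x / (x+s))" by (simp only: divide_minus_right)
      then show ?thesis using s True by (simp add: d_def)
    next
      case False
      then consider "x = 0" | "x = 1" | "x \<notin> {0..1}" by force
      then show ?thesis using p by cases (auto simp: d_def)
    qed
    moreover have e2: "complex_of_real (-s) - complex_of_real x = complex_of_real (-s-x)" by (simp only: of_real_diff)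
    moreover have "d x *\<^sub>R (1 / complex_of_real (-s-x)) = complex_of_real (d x / (-s-x))"
      unfolding scaleR_conv_of_real by (metis of_real_divide mult.right_neutral times_divide_eq_right)
    ultimately show "d x *\<^sub>R (1 / (complex_of_real (-s) - complex_of_real x)) =
       complex_of_real (- (1/B') * (x powr (-p) * (1-x) powr p / (x+s) * indicator {0..1} x))"
      by metis
  qed
  also have "\<dots> = complex_of_real (- (1/B') * (Beta (1-p) p * ((1+s) powr p * s powr (-p) - 1)))"
    using has_bochner_integral_integral_eq[OF beta_I[OF p(1) p1 s]]
    by (simp only: integral_complex_of_real integral_mult_right_zero)
  also have "\<dots> = complex_of_real (-(((1+s) powr p * s powr (-p) - 1)/p))"
    using Bpos p by (simp add: B'eq field_simps)
  finally show ?thesis .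
qed



lemma unif_near_compact:
  fixes f :: "'a::metric_space \<Rightarrow> 'b::metric_space"
  assumes K: "compact K" and c: "\<And>x. x \<in> K \<Longrightarrow> isCont f x" and e: "e > 0"
  shows "\<exists>d>0. \<forall>x\<in>K. \<forall>y. dist y x < d \<longrightarrow> dist (f y) (f x) < e"
proof -
  define G where "G = {ball c r | c r. c \<in> K \<and> r > 0 \<and> (\<forall>y\<in>ball c r. dist (f y) (f c) < e/2)}"
  have "K \<subseteq> \<Union>G"
  proof
    fix x assume x: "x \<in> K"
    from c[OF x] e obtain d where d: "d > 0" "\<forall>y. dist y x < d \<longrightarrow> dist (f y) (f x) < e/2"
      unfolding continuous_at_eps_delta by (metis half_gt_zero)
    then have "\<forall>y\<in>ball x d. dist (f y) (f x) < e/2" by (auto simp: dist_commute)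
    then have "ball x d \<in> G" using x d(1) unfolding G_def by blast
    then show "x \<in> \<Union>G" using d(1) by (metis UnionI centre_in_ball)
  qed
  moreover have "\<And>B. B \<in> G \<Longrightarrow> open B" unfolding G_def by auto
  ultimately obtain d where d: "d > 0" "\<And>x. x \<in> K \<Longrightarrow> \<exists>B \<in> G. ball x d \<subseteq> B"
    using Heine_Borel_lemma[OF K] by metis
  show ?thesis
  proof (intro exI[of _ d] conjI ballI allI impI)
    fix x y assume x: "x \<in> K" and y: "dist y x < d"
    from d(2)[OF x] obtain B where B: "B \<in> G" "ball x d \<subseteq> B" by blast
    then obtain c r where cr: "B = ball c r" "\<forall>y\<in>ball c r. dist (f y) (f c) < e/2"
      unfolding G_def by blast
    have "x \<in> B" "y \<in> B" using B(2) d(1) y by (auto simp: dist_commute)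
    then have "dist (f y) (f c) < e/2" "dist (f x) (f c) < e/2" using cr by auto
    then show "dist (f y) (f x) < e" using dist_triangle[of "f y" "f x" "f c"] dist_commute[of "f x" "f c"] by linarith
  qed (use d in auto)
qed

definition hh :: "real \<Rightarrow> real \<Rightarrow> complex \<Rightarrow> complex" where
  "hh \<alpha> p z = - ((((1 + (- 1 / z) powr complex_of_real \<alpha>) powr complex_of_real p - 1)
                / complex_of_real p) powr complex_of_real (1 / \<alpha>))"

lemma Qpos:
  fixes \<alpha> p x :: real
  assumes "0 < \<alpha>" "0 < p" "x < 0"
  shows "((1 + (-1/x) powr \<alpha>) powr p - 1) / p > 0"
proof -
  have "(-1/x) powr \<alpha> > 0" using assms by simp
  then have "(1 + (-1/x) powr \<alpha>) powr p > 1" using assms by (intro gr_one_powr) auto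
  then show ?thesis using assms by simp
qed

lemma hh_real:
  fixes \<alpha> p x :: real
  assumes "0 < \<alpha>" "0 < p" "x < 0"
  shows "hh \<alpha> p (complex_of_real x) = complex_of_real (-((((1 + (-1/x) powr \<alpha>) powr p - 1)/p) powr (1/\<alpha>)))"
proof -
  have a: "- 1 / complex_of_real x = complex_of_real (-1/x)" by simp
  have b: "complex_of_real (-1/x) powr complex_of_real \<alpha> = complex_of_real ((-1/x) powr \<alpha>)"
    using assms by (intro powr_of_real) simp
  have c: "(1 + complex_of_real ((-1/x) powr \<alpha>)) powr complex_of_real p = complex_of_real ((1 + (-1/x) powr \<alpha>) powr p)"
    using powr_of_real[of "1 + (-1/x) powr \<alpha>" p] by simp
  have d: "(complex_of_real ((1 + (-1/x) powr \<alpha>) powr p) - 1) / complex_of_real p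
      = complex_of_real (((1 + (-1/x) powr \<alpha>) powr p - 1)/p)" by simp
  have e: "complex_of_real (((1 + (-1/x) powr \<alpha>) powr p - 1)/p) powr complex_of_real (1/\<alpha>)
     = complex_of_real ((((1 + (-1/x) powr \<alpha>) powr p - 1)/p) powr (1/\<alpha>))"
    using Qpos[OF assms] by (intro powr_of_real) simp
  show ?thesis unfolding hh_def a b c d e by simp
qed

lemma hh_cont:
  fixes \<alpha> p x :: real
  assumes "0 < \<alpha>" "0 < p" "x < 0"
  shows "isCont (hh \<alpha> p) (complex_of_real x)"
proof -
  have a: "- 1 / complex_of_real x = complex_of_real (-1/x)" by simp
  have b: "complex_of_real (-1/x) powr complex_of_real \<alpha> = complex_of_real ((-1/x) powr \<alpha>)"
    using assms by (intro powr_of_real) simp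
  have c: "(1 + complex_of_real ((-1/x) powr \<alpha>)) powr complex_of_real p = complex_of_real ((1 + (-1/x) powr \<alpha>) powr p)"
    using powr_of_real[of "1 + (-1/x) powr \<alpha>" p] by simp
  have d: "(complex_of_real ((1 + (-1/x) powr \<alpha>) powr p) - 1) / complex_of_real p
      = complex_of_real (((1 + (-1/x) powr \<alpha>) powr p - 1)/p)" by simp
  have pos1: "(-1/x) > 0" using assms by simp
  have pos2: "1 + (-1/x) powr \<alpha> > 0" using assms by (simp add: add_pos_nonneg)
  have nz: "complex_of_real x \<noteq> 0" using assms by simp
  have nonpos: "\<And>r::real. r > 0 \<Longrightarrow> complex_of_real r \<notin> \<real>\<^sub>\<le>\<^sub>0"
    by (auto simp: complex_nonpos_Reals_iff)
  have f1: "- 1 / complex_of_real x \<notin> \<real>\<^sub>\<le>\<^sub>0" unfolding a by (rule nonpos[OF pos1])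
  have f2: "1 + (- 1 / complex_of_real x) powr complex_of_real \<alpha> \<notin> \<real>\<^sub>\<le>\<^sub>0"
    unfolding a b using nonpos[OF pos2] by simp
  have f3: "((1 + (- 1 / complex_of_real x) powr complex_of_real \<alpha>) powr complex_of_real p - 1) / complex_of_real p \<notin> \<real>\<^sub>\<le>\<^sub>0"
    unfolding a b c d by (rule nonpos[OF Qpos[OF assms]])
  have c1: "isCont (\<lambda>z. - 1 / z) (complex_of_real x)" using nz by (intro continuous_intros) auto
  have c2: "isCont (\<lambda>z. (- 1 / z) powr complex_of_real \<alpha>) (complex_of_real x)"
    by (rule isCont_powr_complex[OF f1 c1]) simp
  have c3: "isCont (\<lambda>z. (1 + (- 1 / z) powr complex_of_real \<alpha>) powr complex_of_real p) (complex_of_real x)"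
    by (rule isCont_powr_complex[OF f2 continuous_add[OF continuous_const c2]]) simp
  have c4: "isCont (\<lambda>z. ((1 + (- 1 / z) powr complex_of_real \<alpha>) powr complex_of_real p - 1) / complex_of_real p) (complex_of_real x)"
    using assms by (intro continuous_divide continuous_diff c3 continuous_const) auto
  have c5: "isCont (\<lambda>z. (((1 + (- 1 / z) powr complex_of_real \<alpha>) powr complex_of_real p - 1) / complex_of_real p) powr complex_of_real (1/\<alpha>)) (complex_of_real x)"
    by (rule isCont_powr_complex[OF f3 c4]) simp
  show ?thesis unfolding hh_def by (rule continuous_minus[OF c5])
qed



lemma Im_inv_Complex: "Im (1 / Complex a b) = - b / (a^2 + b^2)"
  by (simp add: Im_divide power2_eq_square)

lemma ct_integrable:
  fixes \<mu> :: "real measure"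
  assumes "prob_on_reals \<mu>" "Im z \<noteq> 0"
  shows "integrable \<mu> (\<lambda>t. 1 / (z - complex_of_real t))"
proof -
  interpret prob_space \<mu> using assms by (simp add: prob_on_reals_def)
  have sm: "sets \<mu> = sets borel" using assms by (simp add: prob_on_reals_def)
  show ?thesis
  proof (rule integrable_const_bound[where B="1/\<bar>Im z\<bar>"])
    show "AE t in \<mu>. norm (1 / (z - complex_of_real t)) \<le> 1/\<bar>Im z\<bar>"
    proof (intro AE_I2)
      fix t
      have "\<bar>Im z\<bar> \<le> cmod (z - complex_of_real t)"
        using abs_Im_le_cmod[of "z - complex_of_real t"] by simp
      then show "norm (1 / (z - complex_of_real t)) \<le> 1/\<bar>Im z\<bar>"
        using assms by (simp add: norm_divide frac_le)
    qed
    show "(\<lambda>t. 1 / (z - complex_of_real t)) \<in> borel_measurable \<mu>"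
      using sm by (simp cong: measurable_cong_sets)
  qed
qed

lemma ct_Im:
  fixes \<mu> :: "real measure"
  assumes "prob_on_reals \<mu>" "e \<noteq> 0"
  shows "Im (cauchy_transform \<mu> (Complex x e)) = - integral\<^sup>L \<mu> (\<lambda>t. e / ((x-t)^2 + e^2))"
proof -
  have eq: "\<And>t. Complex x e - complex_of_real t = Complex (x - t) e"
    by (simp add: complex_eq_iff)
  have "Im (cauchy_transform \<mu> (Complex x e)) = integral\<^sup>L \<mu> (\<lambda>t. Im (1 / (Complex x e - complex_of_real t)))"
    unfolding cauchy_transform_def
    by (rule integral_Im[symmetric], rule ct_integrable[OF assms(1)]) (use assms in simp)
  also have "\<dots> = integral\<^sup>L \<mu> (\<lambda>t. - (e / ((x-t)^2 + e^2)))"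
    unfolding eq Im_inv_Complex by simp
  finally show ?thesis by simp
qed

lemma kernel_integrable:
  fixes \<mu> :: "real measure"
  assumes "prob_on_reals \<mu>" "e > 0"
  shows "integrable \<mu> (\<lambda>t. e / ((x-t)^2 + e^2))"
proof -
  interpret prob_space \<mu> using assms by (simp add: prob_on_reals_def)
  have sm: "sets \<mu> = sets borel" using assms by (simp add: prob_on_reals_def)
  show ?thesis
  proof (rule integrable_const_bound[where B="1/e"])
    show "AE t in \<mu>. norm (e / ((x-t)^2 + e^2)) \<le> 1/e"
    proof (intro AE_I2)
      fix t
      have "e^2 \<le> (x-t)^2 + e^2" by simp
      moreover have "0 < ((x - t)^2 + e^2) * e^2" using assms by (intro mult_pos_pos add_nonneg_pos) auto
      ultimately have "e / ((x-t)^2 + e^2) \<le> e / e^2" using assms by (intro divide_left_mono) auto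
      also have "\<dots> = 1/e" by (simp add: power2_eq_square)
      moreover have "0 \<le> e / ((x-t)^2 + e^2)" using assms by (intro divide_nonneg_nonneg) auto
      ultimately show "norm (e / ((x-t)^2 + e^2)) \<le> 1/e" by simp
    qed
    show "(\<lambda>t. e / ((x-t)^2 + e^2)) \<in> borel_measurable \<mu>"
      using sm by (simp cong: measurable_cong_sets)
  qed
qed

lemma ball_bound:
  fixes \<mu> :: "real measure"
  assumes "prob_on_reals \<mu>" "e > 0"
  shows "measure \<mu> (cball x (2*e)) \<le> 5*e * integral\<^sup>L \<mu> (\<lambda>t. e / ((x-t)^2 + e^2))"
proof -
  interpret prob_space \<mu> using assms by (simp add: prob_on_reals_def)
  have sm: "sets \<mu> = sets borel" using assms by (simp add: prob_on_reals_def)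
  have cb: "cball x (2*e) \<in> sets \<mu>" using sm by simp
  have "measure \<mu> (cball x (2*e)) = integral\<^sup>L \<mu> (indicator (cball x (2*e)))"
    using cb by simp
  also have "\<dots> \<le> integral\<^sup>L \<mu> (\<lambda>t. 5*e * (e / ((x-t)^2 + e^2)))"
  proof (rule integral_mono)
    have sp: "space \<mu> = UNIV" using sets_eq_imp_space_eq[OF sm] by simp
    show "integrable \<mu> (indicator (cball x (2*e)) :: real \<Rightarrow> real)"
      using cb sp by (simp add: integrable_indicator_iff less_top[symmetric])
    show "integrable \<mu> (\<lambda>t. 5*e * (e / ((x-t)^2 + e^2)))"
      using integrable_mult_right[OF kernel_integrable[OF assms, of x], of "5*e"] by simp
    fix t
    show "indicator (cball x (2*e)) t \<le> 5*e * (e / ((x-t)^2 + e^2))"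
    proof (cases "t \<in> cball x (2*e)")
      case True
      then have "\<bar>x - t\<bar> \<le> 2*e" by (simp add: dist_real_def)
      then have "(x-t)^2 \<le> (2*e)^2" using assms by (metis abs_le_square_iff abs_of_pos mult_pos_pos zero_less_numeral power2_abs)
      then have "(x-t)^2 + e^2 \<le> 5 * e^2" by (simp add: power2_eq_square)
      moreover have "(x-t)^2 + e^2 > 0" using assms by (simp add: add_nonneg_pos)
      ultimately have "1 \<le> 5*e*e / ((x-t)^2 + e^2)" by (simp add: power2_eq_square field_simps)
      then show ?thesis using True by simp
    next
      case False
      then show ?thesis using assms by (simp add: add_nonneg_pos)
    qed
  qed
  also have "\<dots> = 5*e * integral\<^sup>L \<mu> (\<lambda>t. e / ((x-t)^2 + e^2))" by (rule integral_mult_right_zero)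
  finally show ?thesis .
qed

lemma null_interval:
  fixes \<mu> :: "real measure" and \<alpha> p a b :: real
  assumes P: "prob_on_reals \<mu>" and ap: "0 < \<alpha>" "0 < p"
    and H: "\<forall>z. 0 < Im z \<longrightarrow> cauchy_transform \<mu> z = hh \<alpha> p z"
    and ab: "a \<le> b" "b < 0"
  shows "measure \<mu> {a..b} = 0"
proof -
  interpret prob_space \<mu> using P by (simp add: prob_on_reals_def)
  have sm: "sets \<mu> = sets borel" using P by (simp add: prob_on_reals_def)
  have key: "measure \<mu> {a..b} \<le> (3*(b-a)+10) * \<eta>" if \<eta>: "\<eta> > 0" for \<eta>
  proof -
    let ?K = "complex_of_real ` {a..b}"
    have cK: "compact ?K"
      by (intro compact_continuous_image continuous_intros) simp
    have ct: "isCont (hh \<alpha> p) y" if "y \<in> ?K" for y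
      using that ab hh_cont[OF ap] by auto
    obtain d where d: "d > 0" "\<forall>y\<in>?K. \<forall>w. dist w y < d \<longrightarrow> dist (hh \<alpha> p w) (hh \<alpha> p y) < \<eta>"
      using unif_near_compact[OF cK ct \<eta>] by blast
    define e where "e = min (d/2) 1"
    have e: "e > 0" "e < d" "e \<le> 1" using d by (auto simp: e_def)
    have cb: "measure \<mu> (cball c (2*e)) \<le> 5*e*\<eta>" if c: "c \<in> {a..b}" for c
    proof -
      have "Complex c e - complex_of_real c = Complex 0 e" by (simp add: complex_eq_iff)
      then have "dist (Complex c e) (complex_of_real c) = \<bar>e\<bar>"
        by (simp only: dist_complex_def complex_norm) simp
      then have dd: "dist (Complex c e) (complex_of_real c) < d" using e by simp
      have mem: "complex_of_real c \<in> ?K" using c by blast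
      have hd: "dist (hh \<alpha> p (Complex c e)) (hh \<alpha> p (complex_of_real c)) < \<eta>"
        using d(2) mem dd by blast
      obtain r where r: "hh \<alpha> p (complex_of_real c) = complex_of_real r"
        using hh_real[OF ap, of c] c ab by auto
      have "\<bar>Im (hh \<alpha> p (Complex c e))\<bar> = \<bar>Im (hh \<alpha> p (Complex c e) - hh \<alpha> p (complex_of_real c))\<bar>"
        using r by simp
      also have "\<dots> \<le> dist (hh \<alpha> p (Complex c e)) (hh \<alpha> p (complex_of_real c))"
        unfolding dist_complex_def by (rule abs_Im_le_cmod)
      finally have "\<bar>Im (hh \<alpha> p (Complex c e))\<bar> < \<eta>" using hd by simp
      moreover have "cauchy_transform \<mu> (Complex c e) = hh \<alpha> p (Complex c e)" using H e by simp
      ultimately have "integral\<^sup>L \<mu> (\<lambda>t. e / ((c-t)^2 + e^2)) < \<eta>"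
        using ct_Im[OF P, of e c] e by simp
      then have "5*e * integral\<^sup>L \<mu> (\<lambda>t. e / ((c-t)^2 + e^2)) \<le> 5*e*\<eta>"
        using e by simp
      then show ?thesis using ball_bound[OF P e(1), of c] by linarith
    qed
    define N where "N = nat \<lceil>(b-a)/(2*e)\<rceil>"
    define I where "I = {k \<in> {0..N}. a + 2*e*real k \<le> b}"
    have fI: "finite I" by (simp add: I_def)
    have cover: "{a..b} \<subseteq> (\<Union>k\<in>I. cball (a + 2*e*real k) (2*e))"
    proof
      fix y assume y: "y \<in> {a..b}"
      define k where "k = nat \<lfloor>(y-a)/(2*e)\<rfloor>"
      have q0: "(y-a)/(2*e) \<ge> 0" using y e by auto
      have rk: "real k = \<lfloor>(y-a)/(2*e)\<rfloor>" using q0 by (simp add: k_def)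
      have k1: "real k \<le> (y-a)/(2*e)" using rk by linarith
      have k2: "(y-a)/(2*e) < real k + 1" using rk by linarith
      have lo: "a + 2*e*real k \<le> y" using k1 e by (simp add: field_simps)
      have hi: "y < a + 2*e*real k + 2*e" using k2 e by (simp add: field_simps)
      have "\<lfloor>(y-a)/(2*e)\<rfloor> \<le> \<lceil>(b-a)/(2*e)\<rceil>"
      proof -
        have "(y-a)/(2*e) \<le> (b-a)/(2*e)" using y e by (intro divide_right_mono) auto
        then show ?thesis using floor_mono[of "(y-a)/(2*e)" "(b-a)/(2*e)"] floor_le_ceiling[of "(b-a)/(2*e)"] by linarith
      qed
      then have "k \<le> N" unfolding k_def N_def by (simp add: nat_mono)
      then have "k \<in> I" using lo y by (simp add: I_def)
      moreover have "y \<in> cball (a + 2*e*real k) (2*e)" using lo hi by (simp add: dist_real_def)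
      ultimately show "y \<in> (\<Union>k\<in>I. cball (a + 2*e*real k) (2*e))" by blast
    qed
    have "measure \<mu> {a..b} \<le> measure \<mu> (\<Union>k\<in>I. cball (a + 2*e*real k) (2*e))"
    proof (rule finite_measure_mono[OF cover])
      have "(\<Union>k\<in>I. cball (a + 2*e*real k) (2*e)) \<in> sets borel"
        using fI by (intro sets.finite_UN) simp_all
      then show "(\<Union>k\<in>I. cball (a + 2*e*real k) (2*e)) \<in> sets \<mu>" using sm by simp
    qed
    also have "\<dots> \<le> (\<Sum>k\<in>I. measure \<mu> (cball (a + 2*e*real k) (2*e)))"
      by (intro finite_measure_subadditive_finite fI) (simp add: image_subset_iff sm)
    also have "\<dots> \<le> (\<Sum>k\<in>I. 5*e*\<eta>)"
    proof (rule sum_mono)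
      fix k assume "k \<in> I"
      then have "a + 2*e*real k \<le> b" by (simp add: I_def)
      moreover have "a \<le> a + 2*e*real k" using e by simp
      ultimately show "measure \<mu> (cball (a + 2*e*real k) (2*e)) \<le> 5*e*\<eta>" by (intro cb) simp
    qed
    also have "\<dots> = real (card I) * (5*e*\<eta>)" by simp
    also have "\<dots> \<le> real (N+1) * (5*e*\<eta>)"
    proof -
      have "card I \<le> card {0..N}" by (intro card_mono) (auto simp: I_def)
      then show ?thesis using e \<eta> by (intro mult_right_mono) auto
    qed
    also have "\<dots> \<le> ((b-a)/(2*e) + 2) * (5*e*\<eta>)"
    proof -
      have "real N = \<lceil>(b-a)/(2*e)\<rceil>" using ab e by (simp add: N_def)
      then have "real N \<le> (b-a)/(2*e) + 1" by linarith
      then show ?thesis using e \<eta> by (intro mult_right_mono) auto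
    qed
    also have "\<dots> = (5/2*(b-a) + 10*e) * \<eta>" using e by (simp add: field_simps)
    also have "\<dots> \<le> (3*(b-a)+10) * \<eta>"
    proof (rule mult_right_mono)
      show "5/2*(b-a) + 10*e \<le> 3*(b-a)+10" using e ab by (simp add: field_simps)
    qed (use \<eta> in simp)
    finally show ?thesis .
  qed
  show ?thesis
  proof (rule ccontr)
    assume "measure \<mu> {a..b} \<noteq> 0"
    then have m: "measure \<mu> {a..b} > 0" using measure_nonneg[of \<mu> "{a..b}"] by linarith
    define C where "C = 3*(b-a)+10"
    have C: "C > 0" using ab by (simp add: C_def)
    have "measure \<mu> {a..b} \<le> C * (measure \<mu> {a..b} / (2*C))"
      using key[of "measure \<mu> {a..b} / (2*C)"] m C by (simp add: C_def)
    also have "\<dots> = measure \<mu> {a..b} / 2" using C by simp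
    finally show False using m by simp
  qed
qed



lemma support_pos:
  fixes \<mu> :: "real measure" and \<alpha> p :: real
  assumes P: "prob_on_reals \<mu>" and ap: "0 < \<alpha>" "0 < p"
    and H: "\<forall>z. 0 < Im z \<longrightarrow> cauchy_transform \<mu> z = hh \<alpha> p z"
  shows "emeasure \<mu> {..<0} = 0" "emeasure \<mu> {0..} = 1"
proof -
  interpret prob_space \<mu> using P by (simp add: prob_on_reals_def)
  have sm: "sets \<mu> = sets borel" using P by (simp add: prob_on_reals_def)
  have sp: "space \<mu> = UNIV" using sets_eq_imp_space_eq[OF sm] by simp
  have U: "{..<0::real} = (\<Union>n::nat. {-(real n+1) .. -1/(real n+1)})"
  proof (intro equalityI subsetI)
    fix y :: real assume "y \<in> {..<0}"
    then have y: "y < 0" by simp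
    define n where "n = nat \<lceil>max (-y) (-1/y)\<rceil>"
    have "real n \<ge> max (-y) (-1/y)" unfolding n_def by linarith
    then have n1: "-y \<le> real n" and n2: "-1/y \<le> real n" by auto
    have "-(real n+1) \<le> y" using n1 by simp
    moreover have "y \<le> -1/(real n+1)"
    proof -
      have "1 \<le> -y * (real n)" using n2 y by (simp add: field_simps)
      then have "1 \<le> -y * (real n + 1)" using y by (simp add: algebra_simps)
      then show ?thesis using y by (simp add: field_simps)
    qed
    ultimately show "y \<in> (\<Union>n::nat. {-(real n+1) .. -1/(real n+1)})" by auto
  next
    fix y assume "y \<in> (\<Union>n::nat. {-(real n+1) .. -1/(real n+1)})"
    then obtain n :: nat where "y \<le> -1/(real n+1)" by auto
    moreover have "-1/(real n+1) < 0" by (simp add: add_pos_nonneg)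
    ultimately have "y < 0" by linarith
    then show "y \<in> {..<0}" by simp
  qed
  have "emeasure \<mu> (\<Union>n::nat. {-(real n+1) .. -1/(real n+1)}) = 0"
  proof (rule emeasure_UN_eq_0)
    fix n :: nat
    have pos: "real n + 1 > 0" by linarith
    have le: "-(real n+1) \<le> -1/(real n+1)"
    proof -
      have "1/(real n+1) \<le> 1" using pos by (simp add: field_simps)
      then show ?thesis using pos by linarith
    qed
    have neg: "-1/(real n+1) < 0" using pos by (simp add: field_simps)
    have "measure \<mu> {-(real n+1) .. -1/(real n+1)} = 0"
      by (rule null_interval[OF P ap H le neg])
    then show "emeasure \<mu> {-(real n+1) .. -1/(real n+1)} = 0"
      using sm by (simp add: emeasure_eq_measure)
  qed (simp add: sm image_subset_iff)
  then show neg: "emeasure \<mu> {..<0} = 0" unfolding U .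
  have "{0::real..} = space \<mu> - {..<0}" using sp by auto
  then have "prob {0..} = 1 - prob {..<0}" using prob_compl[of "{..<0}"] sm by simp
  moreover have "prob {..<0} = 0" using neg by (simp add: emeasure_eq_measure)
  ultimately show "emeasure \<mu> {0..} = 1" by (simp add: emeasure_eq_measure)
qed

lemma ct_neg:
  fixes \<mu> :: "real measure" and \<alpha> p z :: real
  assumes P: "prob_on_reals \<mu>" and ap: "0 < \<alpha>" "0 < p"
    and H: "\<forall>z. 0 < Im z \<longrightarrow> cauchy_transform \<mu> z = hh \<alpha> p z"
    and z: "z < 0"
  shows "cauchy_transform \<mu> (complex_of_real z) = hh \<alpha> p (complex_of_real z)"
proof -
  interpret prob_space \<mu> using P by (simp add: prob_on_reals_def)
  have sm: "sets \<mu> = sets borel" using P by (simp add: prob_on_reals_def)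
  have sp: "space \<mu> = UNIV" using sets_eq_imp_space_eq[OF sm] by simp
  define w where "w = (\<lambda>n::nat. Complex z (inverse (real (Suc n))))"
  have wlim: "w \<longlonglongrightarrow> complex_of_real z"
  proof -
    have "(\<lambda>n. Complex z (inverse (real (Suc n)))) \<longlonglongrightarrow> Complex z 0"
      by (intro tendsto_Complex tendsto_const LIMSEQ_inverse_real_of_nat)
    then show ?thesis by (simp add: w_def complex_of_real_def)
  qed
  have Imw: "Im (w n) > 0" for n by (simp add: w_def)
  have lim1: "(\<lambda>n. cauchy_transform \<mu> (w n)) \<longlonglongrightarrow> hh \<alpha> p (complex_of_real z)"
  proof -
    have "(\<lambda>n. hh \<alpha> p (w n)) \<longlonglongrightarrow> hh \<alpha> p (complex_of_real z)"
      by (rule isCont_tendsto_compose[OF hh_cont[OF ap z] wlim])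
    moreover have "(\<lambda>n. cauchy_transform \<mu> (w n)) = (\<lambda>n. hh \<alpha> p (w n))"
      using H Imw by blast
    ultimately show ?thesis by simp
  qed
  have AEpos: "AE t in \<mu>. t \<ge> 0"
  proof (rule AE_I')
    show "{..<0} \<in> null_sets \<mu>" using support_pos(1)[OF P ap H] sm by (simp add: null_sets_def)
    show "{t \<in> space \<mu>. \<not> 0 \<le> t} \<subseteq> {..<0}" by auto
  qed
  have lim2: "(\<lambda>n. cauchy_transform \<mu> (w n)) \<longlonglongrightarrow> cauchy_transform \<mu> (complex_of_real z)"
    unfolding cauchy_transform_def
  proof (rule integral_dominated_convergence[where w="\<lambda>_. 1 / (-z)"])
    show "(\<lambda>t. 1 / (complex_of_real z - complex_of_real t)) \<in> borel_measurable \<mu>"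
      using sm by (simp cong: measurable_cong_sets)
    show "(\<lambda>t. 1 / (w i - complex_of_real t)) \<in> borel_measurable \<mu>" for i
      using sm by (simp cong: measurable_cong_sets)
    show "integrable \<mu> (\<lambda>_. 1 / (-z))" by simp
    show "AE t in \<mu>. (\<lambda>i. 1 / (w i - complex_of_real t)) \<longlonglongrightarrow> 1 / (complex_of_real z - complex_of_real t)"
      using AEpos
    proof (rule AE_mp, intro AE_I2 impI)
      fix t :: real assume t: "0 \<le> t"
      have "complex_of_real z - complex_of_real t \<noteq> 0" using t z by (simp flip: of_real_diff)
      then show "(\<lambda>i. 1 / (w i - complex_of_real t)) \<longlonglongrightarrow> 1 / (complex_of_real z - complex_of_real t)"
        by (rule tendsto_divide[OF tendsto_const tendsto_diff[OF wlim tendsto_const]])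
    qed
    show "AE t in \<mu>. norm (1 / (w i - complex_of_real t)) \<le> 1 / (-z)" for i
      using AEpos
    proof (rule AE_mp, intro AE_I2 impI)
      fix t :: real assume t: "0 \<le> t"
      have "-z \<le> \<bar>Re (w i - complex_of_real t)\<bar>" using t z by (simp add: w_def)
      also have "\<dots> \<le> cmod (w i - complex_of_real t)" by (rule abs_Re_le_cmod)
      finally have "-z \<le> cmod (w i - complex_of_real t)" .
      then have ge: "-z \<le> cmod (w i - complex_of_real t)" .
      have c0: "cmod (w i - complex_of_real t) > 0" using z ge by linarith
      have pr: "0 < cmod (w i - complex_of_real t) * (-z)" by (rule mult_pos_pos[OF c0]) (use z in simp)
      have "1 / cmod (w i - complex_of_real t) \<le> 1 / (-z)"
        by (rule divide_left_mono[OF ge _ pr]) simp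
      then show "norm (1 / (w i - complex_of_real t)) \<le> 1 / (-z)"
        by (simp add: norm_divide)
    qed
  qed
  from LIMSEQ_unique[OF lim2 lim1] show ?thesis .
qed



theorem mainTheorem10:
  fixes \<alpha> p :: real and \<mu> :: "real measure"
  assumes "0 < \<alpha>" "\<alpha> \<le> 1" "0 < p" "p \<le> 1"
    and "prob_on_reals \<mu>"
    and "\<forall>z. 0 < Im z \<longrightarrow> cauchy_transform \<mu> z =
           - ((((1 + (- 1 / z) powr complex_of_real \<alpha>) powr complex_of_real p - 1)
                / complex_of_real p) powr complex_of_real (1 / \<alpha>))"
  shows "is_M_alpha_plus \<alpha> (beta_dist (1 - p) (1 + p)) \<mu>"
proof -
  have ap: "0 < \<alpha>" "0 < p" using assms by auto
  have P: "prob_on_reals \<mu>" using assms by simp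
  have H: "\<forall>z. 0 < Im z \<longrightarrow> cauchy_transform \<mu> z = hh \<alpha> p z"
    unfolding hh_def using assms(6) .
  show ?thesis unfolding is_M_alpha_plus_def
  proof (intro conjI allI impI)
    show "prob_on_reals \<mu>" by (rule P)
    show "\<mu> {0..} = 1" by (rule support_pos(2)[OF P ap H])
    fix z :: real assume z: "z < 0"
    define s where "s = (-z) powr \<alpha>"
    have s: "s > 0" using z by (simp add: s_def)
    define Q where "Q = ((1 + (-1/z) powr \<alpha>) powr p - 1)/p"
    have Q: "Q > 0" unfolding Q_def by (rule Qpos[OF ap z])
    have inv: "1/s = (-1/z) powr \<alpha>"
    proof -
      have "(-1/z) powr \<alpha> = (1/(-z)) powr \<alpha>" by simp
      also have "\<dots> = 1 powr \<alpha> / (-z) powr \<alpha>" using z powr_divide[of 1 "-z" \<alpha>] by simp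
      finally show ?thesis by (simp add: s_def)
    qed
    have key: "(1+s) powr p * s powr (-p) = (1 + (-1/z) powr \<alpha>) powr p"
    proof -
      have "(1+s) powr p * s powr (-p) = (1+s) powr p / s powr p" by (simp add: powr_minus divide_inverse)
      also have "\<dots> = ((1+s)/s) powr p" using s by (simp add: powr_divide)
      also have "(1+s)/s = 1 + 1/s" using s by (simp add: field_simps)
      finally show ?thesis unfolding inv .
    qed
    have Gmu: "cauchy_transform \<mu> (complex_of_real z) = complex_of_real (-(Q powr (1/\<alpha>)))"
      using ct_neg[OF P ap H z] hh_real[OF ap z] by (simp add: Q_def)
    have Gnu: "cauchy_transform (beta_dist (1-p) (1+p)) (complex_of_real (-((-z) powr \<alpha>))) = complex_of_real (-Q)"
    proof -
      have ee: "complex_of_real (-((-z) powr \<alpha>)) = complex_of_real (-s)" by (simp add: s_def)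
      show ?thesis unfolding ee using beta_cauchy[OF ap(2) assms(4) s] unfolding key Q_def .
    qed
    have e1: "- F_transform (beta_dist (1-p) (1+p)) (complex_of_real (-((-z) powr \<alpha>))) = complex_of_real (1/Q)"
      unfolding F_transform_def Gnu by simp
    have e2: "complex_of_real (1/Q) powr complex_of_real (1/\<alpha>) = complex_of_real ((1/Q) powr (1/\<alpha>))"
      using Q by (intro powr_of_real) simp
    have e3: "(1/Q) powr (1/\<alpha>) = 1 / Q powr (1/\<alpha>)" using Q by (simp add: powr_divide)
    show "F_transform \<mu> (complex_of_real z) =
        - ((- F_transform (beta_dist (1 - p) (1 + p)) (complex_of_real (- ((- z) powr \<alpha>))))
             powr complex_of_real (1 / \<alpha>))"
      unfolding e1 e2 e3 unfolding F_transform_def Gmu by simp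
  qed
qed

end
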